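(* Let $A = \langle \Sigma, Q, q_0, \tau, \phi\rangle$ be an NFA, let $\Psi : Q \to \tilde{Q}$ be a merge operation producing the NFA $\tilde{A} = \langle \Sigma, \tilde{Q}, \tilde{q}_0, \tilde{\tau}, \tilde{\phi}\rangle$, and let $Q^{\mathrm{r}}$ and $\tilde{Q}^{\mathrm{r}}$ be the sets of recurrent states of $A$ and $\tilde{A}$, respectively. If $Q^{\mathrm{r}}$ consists of a single closed communicating class, then $\Psi(Q^{\mathrm{r}}) \subseteq \tilde{Q}^{\mathrm{r}}$.
   Context: An NFA $A = \langle \Sigma, Q, q_0, \tau, \phi\rangle$ has finite alphabet $\Sigma$, finite state set $Q$, initial state $q_0$, transition function $\tau : Q\times\Sigma \to 2^Q$, termination function $\phi: Q \to \{0,1\}$; $\tau$ extends to strings by $\tau(q,\lambda)=\{q\}$, $\tau(q,x\sigma) = \bigcup_{q'\in\tau(q,x)}\tau(q',\sigma)$, and $\tau_\star(S) = \bigcup_{q\in S, x\in\Sigma^\star}\tau(q,x)$. States $q,q'$ communicate if $q' \in \tau_\star(q)$ and $q\in\tau_\star(q')$; the equivalence classes are communicating classes; a class $Q'$ is closed if $\tau_\star(Q') = Q'$. A state is recurrent if it belongs to some closed communicating class. $\tilde{A}$ is obtained from $A$ by a merge operation $\Psi : Q \to \tilde{Q}$ if $\Psi$ is surjective, $\Psi(q_0) = \tilde{q}_0$, $\phi(q) = \tilde{\phi}(\Psi(q))$ for all $q \in Q$, and for all $q\in Q$, $\sigma \in \Sigma$, $q' \in \tau(q,\sigma)$ implies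 $\Psi(q') \in \tilde{\tau}(\Psi(q),\sigma)$. *)

theory Defs
  imports Main
begin

definition nfa :: "'s set \<Rightarrow> 'q set \<Rightarrow> 'q \<Rightarrow> ('q \<Rightarrow> 's \<Rightarrow> 'q set) \<Rightarrow> ('q \<Rightarrow> bool) \<Rightarrow> bool" where
  "nfa Sig Q q0 tau phi \<longleftrightarrow> finite Sig \<and> finite Q \<and> q0 \<in> Q \<and>
     (\<forall>q\<in>Q. \<forall>\<sigma>\<in>Sig. tau q \<sigma> \<subseteq> Q)"

definition tau_str :: "('q \<Rightarrow> 's \<Rightarrow> 'q set) \<Rightarrow> 'q \<Rightarrow> 's list \<Rightarrow> 'q set" where
  "tau_str tau q x = foldl (\<lambda>S \<sigma>. \<Union>q'\<in>S. tau q' \<sigma>) {q} x"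

lemma tau_str_Nil: "tau_str tau q [] = {q}"
  by (simp add: tau_str_def)

lemma tau_str_snoc: "tau_str tau q (x @ [\<sigma>]) = (\<Union>q'\<in>tau_str tau q x. tau q' \<sigma>)"
  by (simp add: tau_str_def)

definition tau_star :: "'s set \<Rightarrow> ('q \<Rightarrow> 's \<Rightarrow> 'q set) \<Rightarrow> 'q set \<Rightarrow> 'q set" where
  "tau_star Sig tau S = (\<Union>q\<in>S. \<Union>x\<in>lists Sig. tau_str tau q x)"

definition communicate :: "'s set \<Rightarrow> ('q \<Rightarrow> 's \<Rightarrow> 'q set) \<Rightarrow> 'q \<Rightarrow> 'q \<Rightarrow> bool" where
  "communicate Sig tau q q' \<longleftrightarrow> q' \<in> tau_star Sig tau {q} \<and> q \<in> tau_star Sig tau {q'}"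

definition comm_classes :: "'s set \<Rightarrow> 'q set \<Rightarrow> ('q \<Rightarrow> 's \<Rightarrow> 'q set) \<Rightarrow> 'q set set" where
  "comm_classes Sig Q tau = (\<lambda>q. {q'\<in>Q. communicate Sig tau q q'}) ` Q"

definition closed_classes :: "'s set \<Rightarrow> 'q set \<Rightarrow> ('q \<Rightarrow> 's \<Rightarrow> 'q set) \<Rightarrow> 'q set set" where
  "closed_classes Sig Q tau = {C \<in> comm_classes Sig Q tau. tau_star Sig tau C = C}"

definition recurrent_states :: "'s set \<Rightarrow> 'q set \<Rightarrow> ('q \<Rightarrow> 's \<Rightarrow> 'q set) \<Rightarrow> 'q set" where
  "recurrent_states Sig Q tau = \<Union>(closed_classes Sig Q tau)"

definition merge_op ::
  "'s set \<Rightarrow> 'q set \<Rightarrow> 'q \<Rightarrow> ('q \<Rightarrow> 's \<Rightarrow> 'q set) \<Rightarrow> ('q \<Rightarrow> bool) \<Rightarrow>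
   'p set \<Rightarrow> 'p \<Rightarrow> ('p \<Rightarrow> 's \<Rightarrow> 'p set) \<Rightarrow> ('p \<Rightarrow> bool) \<Rightarrow> ('q \<Rightarrow> 'p) \<Rightarrow> bool" where
  "merge_op Sig Q q0 tau phi Q' q0' tau' phi' Psi \<longleftrightarrow>
     Psi ` Q = Q' \<and> Psi q0 = q0' \<and> (\<forall>q\<in>Q. phi q = phi' (Psi q)) \<and>
     (\<forall>q\<in>Q. \<forall>\<sigma>\<in>Sig. \<forall>q'\<in>tau q \<sigma>. Psi q' \<in> tau' (Psi q) \<sigma>)"

end

theory Submission
  imports Defs
begin

lemma tau_str_append:
  "tau_str tau q (x @ y) = (\<Union>q'\<in>tau_str tau q x. tau_str tau q' y)"
proof (induction y rule: rev_induct)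
  case Nil then show ?case by (simp add: tau_str_Nil)
next
  case (snoc s y)
  have "tau_str tau q (x @ y @ [s]) = (\<Union>q''\<in>tau_str tau q (x @ y). tau q'' s)"
    using tau_str_snoc[of tau q "x@y" s] by simp
  also have "\<dots> = (\<Union>q'\<in>tau_str tau q x. tau_str tau q' (y @ [s]))"
    using snoc by (auto simp: tau_str_snoc)
  finally show ?case by simp
qed

lemma ts_refl: "q \<in> tau_star Sig tau {q}"
  unfolding tau_star_def by (rule UN_I[of q], simp, rule UN_I[of "[]"], auto simp: tau_str_Nil)

lemma ts_trans:
  assumes "a \<in> tau_star Sig tau {q}" "b \<in> tau_star Sig tau {a}"
  shows "b \<in> tau_star Sig tau {q}"
proof -
  obtain x where x: "x \<in> lists Sig" "a \<in> tau_str tau q x" using assms(1) by (auto simp: tau_star_def)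
  obtain y where y: "y \<in> lists Sig" "b \<in> tau_str tau a y" using assms(2) by (auto simp: tau_star_def)
  have "b \<in> tau_str tau q (x @ y)" using x y by (auto simp: tau_str_append)
  moreover have "x @ y \<in> lists Sig" using x y by simp
  ultimately show ?thesis unfolding tau_star_def by blast
qed

lemma ts_union: "tau_star Sig tau S = (\<Union>q\<in>S. tau_star Sig tau {q})"
  by (auto simp: tau_star_def)

lemma tau_str_in_Q:
  assumes "nfa Sig Q q0 tau phi" "q \<in> Q" "x \<in> lists Sig"
  shows "tau_str tau q x \<subseteq> Q"
  using assms(3)
proof (induction x rule: rev_induct)
  case Nil then show ?case using assms(2) by (simp add: tau_str_Nil)
next
  case (snoc s x)
  have IH: "tau_str tau q x \<subseteq> Q" and sS: "s \<in> Sig" using snoc by auto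
  have "\<forall>q\<in>Q. \<forall>\<sigma>\<in>Sig. tau q \<sigma> \<subseteq> Q" using assms(1) unfolding nfa_def by blast
  then show ?case using IH sS unfolding tau_str_snoc by blast
qed

lemma ts_in_Q:
  assumes "nfa Sig Q q0 tau phi" "q \<in> Q"
  shows "tau_star Sig tau {q} \<subseteq> Q"
  using tau_str_in_Q[OF assms] by (auto simp: tau_star_def)

lemma sim_str:
  assumes "nfa Sig Q q0 tau phi" "merge_op Sig Q q0 tau phi Qt q0t taut phit Psi"
    "q \<in> Q" "x \<in> lists Sig" "q' \<in> tau_str tau q x"
  shows "Psi q' \<in> tau_str taut (Psi q) x"
  using assms(4,5)
proof (induction x arbitrary: q' rule: rev_induct)
  case Nil then show ?case by (simp add: tau_str_Nil)
next
  case (snoc s x)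
  then obtain q'' where q'': "q'' \<in> tau_str tau q x" "q' \<in> tau q'' s" by (auto simp: tau_str_snoc)
  have "q'' \<in> Q" using tau_str_in_Q[OF assms(1,3)] snoc.prems q'' by auto
  have "Psi q'' \<in> tau_str taut (Psi q) x" using snoc q'' by auto
  moreover have "Psi q' \<in> taut (Psi q'') s"
    using assms(2) \<open>q'' \<in> Q\<close> q'' snoc.prems unfolding merge_op_def by auto
  ultimately show ?case by (auto simp: tau_str_snoc)
qed

lemma sim:
  assumes "nfa Sig Q q0 tau phi" "merge_op Sig Q q0 tau phi Qt q0t taut phit Psi"
    "q \<in> Q" "q' \<in> tau_star Sig tau {q}"
  shows "Psi q' \<in> tau_star Sig taut {Psi q}"
  using sim_str[OF assms(1,2,3)] assms(4) by (auto simp: tau_star_def)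

lemma reach_closed:
  assumes "nfa Sig Q q0 tau phi" "q \<in> Q"
  shows "\<exists>C\<in>closed_classes Sig Q tau. \<exists>c\<in>C. c \<in> tau_star Sig tau {q}"
proof -
  have fin: "finite Q" using assms(1) by (simp add: nfa_def)
  let ?R = "tau_star Sig tau {q}"
  have "card ` (\<lambda>x. tau_star Sig tau {x}) ` ?R \<noteq> {}" using ts_refl[of q] by blast
  define m where "m = Min (card ` (\<lambda>x. tau_star Sig tau {x}) ` ?R)"
  have finR: "finite ?R" using ts_in_Q[OF assms] fin finite_subset by blast
  have "m \<in> card ` (\<lambda>x. tau_star Sig tau {x}) ` ?R"
    unfolding m_def using finR ts_refl[of q] by (intro Min_in) auto
  then obtain q' where q': "q' \<in> ?R" "card (tau_star Sig tau {q'}) = m" by auto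
  have q'Q: "q' \<in> Q" using q' ts_in_Q[OF assms] by auto
  have minm: "\<And>x. x \<in> ?R \<Longrightarrow> m \<le> card (tau_star Sig tau {x})"
    unfolding m_def using finR by (intro Min_le) auto
  have bk: "q' \<in> tau_star Sig tau {x}" if "x \<in> tau_star Sig tau {q'}" for x
  proof -
    have sub: "tau_star Sig tau {x} \<subseteq> tau_star Sig tau {q'}" using that ts_trans by fast
    have fq': "finite (tau_star Sig tau {q'})" using ts_in_Q[OF assms(1) q'Q] fin finite_subset by blast
    have "x \<in> ?R" using that q'(1) ts_trans by fast
    then have "card (tau_star Sig tau {q'}) \<le> card (tau_star Sig tau {x})" using minm q'(2) by simp
    then have "tau_star Sig tau {x} = tau_star Sig tau {q'}" using card_subset_eq[OF fq' sub] sub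
      card_mono[OF fq' sub] by linarith
    then show ?thesis using ts_refl[of q'] by simp
  qed
  define C where "C = {x\<in>Q. communicate Sig tau q' x}"
  have CE: "C = tau_star Sig tau {q'}"
    using bk ts_in_Q[OF assms(1) q'Q] unfolding C_def communicate_def by auto
  have "tau_star Sig tau C = C"
  proof
    show "tau_star Sig tau C \<subseteq> C"
      unfolding CE by (subst ts_union) (use ts_trans in fast)
    show "C \<subseteq> tau_star Sig tau C" by (subst ts_union) (use ts_refl in fast)
  qed
  moreover have "C \<in> comm_classes Sig Q tau" unfolding comm_classes_def C_def using q'Q by auto
  ultimately have "C \<in> closed_classes Sig Q tau" by (simp add: closed_classes_def)
  moreover have "q' \<in> C" using CE ts_refl by fast
  ultimately show ?thesis using q'(1) by blast
qed

theorem lemma4: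
  fixes Sig :: "'s set" and Q :: "'q set" and Qt :: "'p set"
  assumes "nfa Sig Q q0 tau phi"
    and "nfa Sig Qt q0t taut phit"
    and "merge_op Sig Q q0 tau phi Qt q0t taut phit Psi"
    and "\<exists>C \<in> closed_classes Sig Q tau. recurrent_states Sig Q tau = C"
  shows "Psi ` recurrent_states Sig Q tau \<subseteq> recurrent_states Sig Qt taut"
proof
  fix p assume "p \<in> Psi ` recurrent_states Sig Q tau"
  then obtain c where c: "c \<in> recurrent_states Sig Q tau" "p = Psi c" by auto
  obtain C where C: "C \<in> closed_classes Sig Q tau" "recurrent_states Sig Q tau = C"
    using assms(4) by blast
  have cC: "c \<in> C" using c C by simp
  obtain q1 where q1: "q1 \<in> Q" "C = {x\<in>Q. communicate Sig tau q1 x}"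
    using C(1) by (auto simp: closed_classes_def comm_classes_def)
  have CQ: "C \<subseteq> Q" using q1 by auto
  have comC: "\<And>a b. a \<in> C \<Longrightarrow> b \<in> C \<Longrightarrow> b \<in> tau_star Sig tau {a}"
  proof -
    fix a b assume "a \<in> C" "b \<in> C"
    then have "a \<in> tau_star Sig tau {q1} \<and> q1 \<in> tau_star Sig tau {a}" "b \<in> tau_star Sig tau {q1}"
      using q1(2) unfolding communicate_def by auto
    then show "b \<in> tau_star Sig tau {a}" using ts_trans by metis
  qed
  have QtE: "Qt = Psi ` Q" using assms(3) by (simp add: merge_op_def)
  have reach_c: "c \<in> tau_star Sig tau {q}" if "q \<in> Q" for q
  proof -
    obtain D d where D: "D \<in> closed_classes Sig Q tau" "d \<in> D" "d \<in> tau_star Sig tau {q}"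
      using reach_closed[OF assms(1) \<open>q \<in> Q\<close>] by blast
    have "d \<in> C" using D C by (auto simp: recurrent_states_def)
    then show ?thesis using comC[OF _ cC] D(3) ts_trans by metis
  qed
  have cQ: "c \<in> Q" using cC CQ by auto
  define K where "K = {r\<in>Qt. communicate Sig taut p r}"
  have pQt: "p \<in> Qt" using QtE c cQ by auto
  have bkp: "p \<in> tau_star Sig taut {r}" if "r \<in> Qt" for r
  proof -
    obtain q where "q \<in> Q" "r = Psi q" using \<open>r \<in> Qt\<close> QtE by auto
    then show ?thesis using sim[OF assms(1,3) \<open>q \<in> Q\<close> reach_c[OF \<open>q \<in> Q\<close>]] c(2) by simp
  qed
  have KE: "K = tau_star Sig taut {p}"
    using bkp ts_in_Q[OF assms(2) pQt] unfolding K_def communicate_def by auto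
  have "tau_star Sig taut K = K"
  proof
    show "tau_star Sig taut K \<subseteq> K"
      unfolding KE by (subst ts_union) (use ts_trans in fast)
    show "K \<subseteq> tau_star Sig taut K" by (subst ts_union) (use ts_refl in fast)
  qed
  moreover have "K \<in> comm_classes Sig Qt taut" unfolding comm_classes_def K_def using pQt by auto
  ultimately have "K \<in> closed_classes Sig Qt taut" by (simp add: closed_classes_def)
  moreover have "p \<in> K" using KE ts_refl by fast
  ultimately show "p \<in> recurrent_states Sig Qt taut" by (auto simp: recurrent_states_def)
qed

end
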